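(* For every nonnegative integer $r$, $$\sum_{n=1}^{\infty}\frac{n}{(2n+2r+3)(2n-1)^2(2n+1)(2n+3)}\frac{\binom{2n}{n}}{\binom{2n+2r+2}{n+r+1}}=\frac{1}{2^{2r+2}}\left(\frac{8\wp(2r+4)-8\wp(2r+2)+3\wp(2r)}{128}+\frac{6}{128(4+2r)}-\frac{3}{128(2+2r)}\right),$$ where $\wp(q)=\int_0^{\pi/2} z\sin^q z\,\mathrm{d}z$. *)

theory Defs
  imports "HOL-Analysis.Analysis"
begin

definition wp :: "nat \<Rightarrow> real" where
  "wp q = integral {0..pi/2} (\<lambda>z. z * sin z ^ q)"

end

theory Submission
  imports Defs "HOL-Real_Asymp.Real_Asymp"
begin

definition cb :: "nat \<Rightarrow> real" where "cb k = real ((2*k) choose k)"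

lemma cb_pos: "cb k > 0" unfolding cb_def by simp

lemma cb_Suc_nat: "(k+1) * ((2*k+2) choose (k+1)) = 2*(2*k+1) * ((2*k) choose k)"
proof -
  have a: "Suc k * (Suc (2*k+1) choose Suc k) = Suc (2*k+1) * ((2*k+1) choose k)"
    by (rule Suc_times_binomial)
  have b: "Suc (2*k) * ((2*k) choose k) = (Suc (2*k) choose Suc k) * Suc k"
    by (rule Suc_times_binomial_eq)
  have c: "((2*k+1) choose k) = ((2*k+1) choose (k+1))"
    using binomial_symmetric[of k "2*k+1"] by simp
  show ?thesis using a b c by (simp add: algebra_simps)
qed

lemma cb_Suc: "cb (Suc k) = cb k * (2*(2*real k+1)) / (real k+1)"
proof -
  have "real ((k+1) * ((2*k+2) choose (k+1))) = real (2*(2*k+1) * ((2*k) choose k))"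
    using cb_Suc_nat by metis
  hence "(real k+1) * cb (Suc k) = 2*(2*real k+1) * cb k"
    unfolding cb_def by (simp add: algebra_simps)
  thus ?thesis by (simp add: field_simps)
qed

lemma rat_lim1: "(\<lambda>n. (real n + real r + 2) / (2*(2*real n + 2*real r + 3))) \<longlonglongrightarrow> 1/4"
  by real_asymp

lemma rat_lim2: "(\<lambda>n. (16*real n^4 + 8*(real r+4)*real n^3 + (-2*real r^2+2*real r-4)*real n^2
   - (real r^2+13*real r+32)*real n + 3*real r^2+3*real r-12) * real n /
   ((2*real n + 2*real r + 3) * (2*real n - 1)^2 * (2*real n + 1) * (2*real n + 3))) \<longlonglongrightarrow> 1/2"
  by real_asymp

definition t :: "nat \<Rightarrow> nat \<Rightarrow> real" where
 "t r n = real n / ((2*real n + 2*real r + 3) * (2*real n - 1)^2 * (2*real n + 1) * (2*real n + 3)) * (cb n / cb (n+r+1))"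

definition Y :: "nat \<Rightarrow> nat \<Rightarrow> real" where
 "Y r n = 16*real n^4 + 8*(real r+4)*real n^3 + (-2*real r^2+2*real r-4)*real n^2
   - (real r^2+13*real r+32)*real n + 3*real r^2+3*real r-12"

definition Gn :: "nat \<Rightarrow> nat \<Rightarrow> real" where
 "Gn r n = Y r n / (real r + 3) * t r n"

lemma poly_id:
  fixes N R :: real
  shows "8*(R+3)*(3*R^2+5*R+4)*N*(N+R+2)*(R+3)*(2*N+5) - 2*((2*R+1)*(3*R^2+11*R+12))*N*(R+3)*(2*N+2*R+5)*(2*N+5)
   = 2*(16*(N+1)^4 + 8*(R+4)*(N+1)^3 + (-2*R^2+2*R-4)*(N+1)^2 - (R^2+13*R+32)*(N+1) + 3*R^2+3*R-12)*(N+R+2)*(2*N-1)^2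
     - 2*(16*N^4 + 8*(R+4)*N^3 + (-2*R^2+2*R-4)*N^2 - (R^2+13*R+32)*N + 3*R^2+3*R-12)*N*(2*N+2*R+5)*(2*N+5)"
  by (simp add: algebra_simps power2_eq_square power3_eq_cube power4_eq_xxxx)

lemma rat_id:
  fixes N R q :: real
  assumes N: "N \<ge> 0" and R: "R \<ge> 0" and a: "2*N - 1 \<noteq> 0"
  defines "Dc \<equiv> 2*(R+3)*(2*N+2*R+3)*(2*N+2*R+5)*(2*N-1)^2*(2*N+1)*(2*N+3)*(2*N+5)"
  defines "Y0 \<equiv> 16*N^4 + 8*(R+4)*N^3 + (-2*R^2+2*R-4)*N^2 - (R^2+13*R+32)*N + 3*R^2+3*R-12"
  defines "Y1 \<equiv> 16*(N+1)^4 + 8*(R+4)*(N+1)^3 + (-2*R^2+2*R-4)*(N+1)^2 - (R^2+13*R+32)*(N+1) + 3*R^2+3*R-12"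
  shows "8*(R+3)*(3*R^2+5*R+4) * (q * (N*(N+R+2) / (2*(2*N+2*R+3)*(2*N+2*R+5)*(2*N-1)^2*(2*N+1)*(2*N+3))))
      - (2*R+1)*(3*R^2+11*R+12) * (q * (N / ((2*N+2*R+3)*(2*N-1)^2*(2*N+1)*(2*N+3))))
     = Y1/(R+3) * (q * ((N+R+2)/((2*N+1)*(2*N+3)*(2*N+5)*(2*N+2*R+3)*(2*N+2*R+5))))
      - Y0/(R+3) * (q * (N / ((2*N+2*R+3)*(2*N-1)^2*(2*N+1)*(2*N+3))))"
proof -
  have d: "2*N + 1 \<noteq> 0" "2*N + 3 \<noteq> 0" "2*N + 2*R + 3 \<noteq> 0" "2*N+2*R+5 \<noteq> 0" "2*N+5\<noteq>0" "N+R+2\<noteq>0" "R+3\<noteq>0"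
    using N R by auto
  have gl: "c * (q * (s / den)) = q * (c * s * ex) / (den*ex)" if "den \<noteq> 0" "ex \<noteq> 0" for c s den ex :: real
    using that by simp
  have gl2: "c / m * (q * (s / den)) = q * (c * s * ex) / (m*den*ex)" if "den \<noteq> 0" "ex \<noteq> 0" "m \<noteq> 0" for c s den ex m :: real
    using that by simp
  have e1: "8*(R+3)*(3*R^2+5*R+4) * (q * (N*(N+R+2) / (2*(2*N+2*R+3)*(2*N+2*R+5)*(2*N-1)^2*(2*N+1)*(2*N+3))))
     = q * (8*(R+3)*(3*R^2+5*R+4)*(N*(N+R+2))*((R+3)*(2*N+5))) / Dc"
  proof -
    have "Dc = (2*(2*N+2*R+3)*(2*N+2*R+5)*(2*N-1)^2*(2*N+1)*(2*N+3)) * ((R+3)*(2*N+5))"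
      unfolding Dc_def by (simp only: mult_ac)
    thus ?thesis by (simp only:) (rule gl; use d a in simp)
  qed
  have e2: "(2*R+1)*(3*R^2+11*R+12) * (q * (N / ((2*N+2*R+3)*(2*N-1)^2*(2*N+1)*(2*N+3))))
     = q * ((2*R+1)*(3*R^2+11*R+12)*N*(2*(R+3)*(2*N+2*R+5)*(2*N+5))) / Dc"
  proof -
    have "Dc = ((2*N+2*R+3)*(2*N-1)^2*(2*N+1)*(2*N+3)) * (2*(R+3)*(2*N+2*R+5)*(2*N+5))"
      unfolding Dc_def by (simp only: mult_ac)
    thus ?thesis by (simp only:) (rule gl; use d a in simp)
  qed
  have e3: "Y1/(R+3) * (q * ((N+R+2)/((2*N+1)*(2*N+3)*(2*N+5)*(2*N+2*R+3)*(2*N+2*R+5))))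
     = q * (Y1*(N+R+2)*(2*(2*N-1)^2)) / Dc"
  proof -
    have "Dc = (R+3)*((2*N+1)*(2*N+3)*(2*N+5)*(2*N+2*R+3)*(2*N+2*R+5)) * (2*(2*N-1)^2)"
      unfolding Dc_def by (simp only: mult_ac)
    thus ?thesis by (simp only:) (rule gl2; use d a in simp)
  qed
  have e4: "Y0/(R+3) * (q * (N / ((2*N+2*R+3)*(2*N-1)^2*(2*N+1)*(2*N+3))))
     = q * (Y0*N*(2*(2*N+2*R+5)*(2*N+5))) / Dc"
  proof -
    have "Dc = (R+3)*((2*N+2*R+3)*(2*N-1)^2*(2*N+1)*(2*N+3)) * (2*(2*N+2*R+5)*(2*N+5))"
      unfolding Dc_def by (simp only: mult_ac)
    thus ?thesis by (simp only:) (rule gl2; use d a in simp)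
  qed
  have p: "8*(R+3)*(3*R^2+5*R+4)*(N*(N+R+2))*((R+3)*(2*N+5)) - (2*R+1)*(3*R^2+11*R+12)*N*(2*(R+3)*(2*N+2*R+5)*(2*N+5))
     = Y1*(N+R+2)*(2*(2*N-1)^2) - Y0*N*(2*(2*N+2*R+5)*(2*N+5))"
    unfolding Y0_def Y1_def using poly_id[of R N] by (simp add: algebra_simps)
  have fin: "q*a/D - q*b/D = q*c/D - q*d/D" if "a - b = c - d" for a b c d D :: real
    by (metis that diff_divide_distrib right_diff_distrib)
  show ?thesis unfolding e1 e2 e3 e4 by (rule fin[OF p])
qed
lemma wp_int: "((\<lambda>z. z * sin z ^ q) has_integral wp q) {0..pi/2}"
  unfolding wp_def
  by (intro integrable_integral integrable_continuous_interval continuous_intros)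

lemma d1: "((\<lambda>z::real. z^2/2) has_real_derivative x) (at x)"
proof -
  have "((\<lambda>z::real. z^2/2) has_real_derivative (real 2 * x^(2 - Suc 0) / 2)) (at x)"
    by (intro DERIV_cdivide DERIV_pow)
  thus ?thesis by simp
qed

lemma wp0: "wp 0 = pi^2/8"
proof -
  have "((\<lambda>z. z) has_integral ((\<lambda>z. z^2/2) (pi/2) - (\<lambda>z. z^2/2) 0)) {0..pi/2}"
  proof (rule fundamental_theorem_of_calculus)
    show "0 \<le> pi/2" by simp
    fix x :: real
    show "((\<lambda>z. z^2/2) has_vector_derivative x) (at x within {0..pi/2})"
      using has_field_derivative_at_within[OF d1[of x]] by (simp only: has_real_derivative_iff_has_vector_derivative)
  qed
  hence "((\<lambda>z. z * sin z ^ 0) has_integral pi^2/8) {0..pi/2}"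
    by (simp add: power_divide)
  thus ?thesis using wp_int[of 0] has_integral_unique by blast
qed
lemma alg: fixes co s c Q z S :: real
  assumes "co * co = 1 - s * s" "c * (Q+2) = 1"
  shows "(- 1 * (s * S) + (Q + 1) * (co * 1 * S) * - z) * co + - s * 1 * (- z * (s * S)) + (0 * (s * (s * S)) + (Q + 2) * (co * 1 * (s * S)) * c) = (Q + 2) * (z * (s * (s * S))) - (Q + 1) * (z * S)"
proof -
  have "(- 1 * (s * S) + (Q + 1) * (co * 1 * S) * - z) * co + - s * 1 * (- z * (s * S)) + (0 * (s * (s * S)) + (Q + 2) * (co * 1 * (s * S)) * c)
    = - (s * S * co) + (c * (Q+2)) * (s * S * co) - z * (Q+1) * S * (co * co) + z * s * s * S" by (simp add: algebra_simps)
  also have "\<dots> = (Q + 2) * (z * (s * (s * S))) - (Q + 1) * (z * S)" unfolding assms by (simp add: algebra_simps)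
  finally show ?thesis .
qed

lemma wp_rec: "real (q+2) * wp (q+2) = real (q+1) * wp q + 1/real(q+2)"
proof -
  define c where "c = 1/real(q+2)"
  have cq: "c * real (q+2) = 1" unfolding c_def by simp
  define F where "F z = -z * sin z^(q+1) * cos z + c * sin z^(q+2)" for z
  have der: "(F has_real_derivative (real (q+2)*(z * sin z^(q+2)) - real (q+1)*(z * sin z^q))) (at z)" for z
  proof -
    have cc: "cos z * cos z = 1 - sin z * sin z" using sin_cos_squared_add[of z] by (simp add: power2_eq_square)
    have ex1: "sin z ^ (q + 1 - Suc 0) = sin z ^ q" by simp
    have ex2: "sin z ^ (Suc (Suc q) - Suc 0) = sin z * sin z ^ q" by simp
    have ex3: "sin z ^ (q + 1) = sin z * sin z ^ q" by simp
    have ex4: "real (Suc (Suc q)) = real q + 2" by simp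
    have ex5: "real (q + 1) = real q + 1" by simp
    have ex6: "sin z ^ (q + 2) = sin z * (sin z * sin z ^ q)" by simp
    have ex7: "real (q + 2) = real q + 2" by simp
    have ex8: "sin z ^ (q + 2 - Suc 0) = sin z * sin z ^ q" by simp
    have cq': "c * (real q + 2) = 1" using cq by (simp add: add.commute)
    show ?thesis
      unfolding F_def
      apply (rule derivative_eq_intros refl)+
      apply (simp only: ex1 ex2 ex3 ex4 ex5 ex6 ex7 ex8)
      by (rule alg[OF cc cq'])
  qed
  have "((\<lambda>z. real (q+2)*(z * sin z^(q+2)) - real (q+1)*(z * sin z^q)) has_integral (F (pi/2) - F 0)) {0..pi/2}"
  proof (rule fundamental_theorem_of_calculus)
    show "0 \<le> pi/2" by simp
    fix x :: real
    show "(F has_vector_derivative (real (q+2)*(x * sin x^(q+2)) - real (q+1)*(x * sin x^q))) (at x within {0..pi/2})"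
      using has_field_derivative_at_within[OF der[of x]] by (simp only: has_real_derivative_iff_has_vector_derivative)
  qed
  moreover have "F (pi/2) - F 0 = 1/real(q+2)" unfolding F_def c_def by simp
  ultimately have i1: "((\<lambda>z. real (q+2)*(z * sin z^(q+2)) - real (q+1)*(z * sin z^q)) has_integral 1/real(q+2)) {0..pi/2}"
    by simp
  have i2: "((\<lambda>z. real (q+2)*(z * sin z^(q+2)) - real (q+1)*(z * sin z^q)) has_integral (real (q+2) * wp (q+2) - real (q+1) * wp q)) {0..pi/2}"
    by (intro has_integral_diff has_integral_mult_right wp_int)
  from has_integral_unique[OF i1 i2] show ?thesis by simp
qed
lemma step_id:
  "8*(real r+3)*(3*real r^2+5*real r+4) * t (Suc r) n - (2*real r+1)*(3*real r^2+11*real r+12) * t r n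
   = Gn r (Suc n) - Gn r n"
proof -
  define x where "x = cb n"
  define y where "y = cb (n+r+1)"
  define N where "N = real n"
  define R where "R = real r"
  have x: "x > 0" and y: "y > 0" unfolding x_def y_def by (simp_all add: cb_pos)
  have N: "N \<ge> 0" and R: "R \<ge> 0" unfolding N_def R_def by simp_all
  have a: "2*N - 1 \<noteq> 0" unfolding N_def by (cases n) auto
  have d: "2*N + 1 \<noteq> 0" "2*N + 3 \<noteq> 0" "2*N + 2*R + 3 \<noteq> 0" "2*N+2*R+5 \<noteq> 0" "2*N+5\<noteq>0" "N+R+2\<noteq>0" "N+1\<noteq>0"
    using N R by auto
  have e1: "cb (n + Suc r + 1) = y * (2*(2*(N+R+1)+1)) / (N+R+2)"
    unfolding y_def N_def R_def using cb_Suc[of "n+r+1"] by (simp add: algebra_simps)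
  have e2: "cb (Suc n + r + 1) = y * (2*(2*(N+R+1)+1)) / (N+R+2)"
    unfolding y_def N_def R_def using cb_Suc[of "n+r+1"] by (simp add: algebra_simps)
  have e3: "cb (Suc n) = x * (2*(2*N+1)) / (N+1)"
    unfolding x_def N_def using cb_Suc[of n] by simp
  have xx: "cb n = x" and yy: "cb (n+r+1) = y" unfolding x_def y_def by simp_all
  have nn: "real (Suc n) = N + 1" "real (Suc r) = R + 1" unfolding N_def R_def by simp_all
  have t1: "t (Suc r) n = x/y * (N*(N+R+2) / (2*(2*N+2*R+3)*(2*N+2*R+5)*(2*N-1)^2*(2*N+1)*(2*N+3)))"
  proof -
    have g1: "2*N + 2*(R+1) + 3 = 2*N+2*R+5" "2*(2*(N+R+1)+1) = 2*(2*N+2*R+3)" by simp_all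
    have gen1: "N/(f*A^2*b*c) * (x/(y*(2*e)/k)) = x/y * (N*k/(2*e*f*A^2*b*c))"
      if "f \<noteq> 0" "A \<noteq> 0" "b \<noteq> 0" "c \<noteq> 0" "e \<noteq> 0" "k \<noteq> 0" "y \<noteq> 0" for f A b c e k :: real
      using that by (simp add: field_simps power2_eq_square)
    show ?thesis
      unfolding t_def e1 xx nn N_def[symmetric] R_def[symmetric] g1
      by (rule gen1) (use d y a in auto)
  qed
  have t0: "t r n = x/y * (N / ((2*N+2*R+3)*(2*N-1)^2*(2*N+1)*(2*N+3)))"
    unfolding t_def xx yy N_def[symmetric] R_def[symmetric] by (simp add: mult_ac)
  have g: "2*(N+1) + 2*R + 3 = 2*N+2*R+5" "2*(N+1) - 1 = 2*N+1" "2*(N+1) + 1 = 2*N+3" "2*(N+1) + 3 = 2*N+5"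
    "2*(2*(N+R+1)+1) = 2*(2*N+2*R+3)" by simp_all
  have gen: "(N1)/(f*b^2*c*d) * ((x*(2*b)/(N1)) / (y*(2*e)/k)) = x/y * (k/(b*c*d*e*f))"
    if "N1 \<noteq> 0" "f \<noteq> 0" "b \<noteq> 0" "c \<noteq> 0" "d \<noteq> 0" "e \<noteq> 0" "k \<noteq> 0" "y \<noteq> 0" for N1 f b c d e k :: real
    using that by (simp add: field_simps power2_eq_square)
  have t2: "t r (Suc n) = x/y * ((N+R+2)/((2*N+1)*(2*N+3)*(2*N+5)*(2*N+2*R+3)*(2*N+2*R+5)))"
    unfolding t_def e2 e3 nn N_def[symmetric] R_def[symmetric] g
    by (rule gen) (use d y in auto)
  have y0: "Y r n = 16*N^4 + 8*(R+4)*N^3 + (-2*R^2+2*R-4)*N^2 - (R^2+13*R+32)*N + 3*R^2+3*R-12"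
    unfolding Y_def N_def R_def by simp
  have y1: "Y r (Suc n) = 16*(N+1)^4 + 8*(R+4)*(N+1)^3 + (-2*R^2+2*R-4)*(N+1)^2 - (R^2+13*R+32)*(N+1) + 3*R^2+3*R-12"
    unfolding Y_def nn N_def[symmetric] R_def[symmetric] by simp
  show ?thesis
    unfolding Gn_def t0 t1 t2 y0 y1 R_def[symmetric]
    by (rule rat_id[OF N R a])
qed


lemma beta_lim: "(\<lambda>n. cb n / cb (n+r+1)) \<longlonglongrightarrow> 1/4^(r+1)"
proof (induction r)
  case 0
  have "(\<lambda>n. cb n / cb (n+0+1)) = (\<lambda>n. (real n + real 0 + 2 - 1) / (2*(2*real n + 2*real 0 + 3) - 4))"
  proof
    fix n
    show "cb n / cb (n+0+1) = (real n + real 0 + 2 - 1) / (2*(2*real n + 2*real 0 + 3) - 4)"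
      using cb_Suc[of n] cb_pos[of n] cb_pos[of "Suc n"] by (simp add: field_simps)
  qed
  also have "\<dots> \<longlonglongrightarrow> 1/4" by real_asymp
  finally show ?case by simp
next
  case (Suc r)
  have "(\<lambda>n. cb n / cb (n+Suc r+1)) = (\<lambda>n. (cb n / cb (n+r+1)) * ((real n + real r + 2) / (2*(2*real n + 2*real r + 3))))"
  proof
    fix n
    have h: "cb (n+Suc r+1) = cb (n+r+1) * (2*(2*real n + 2*real r + 3)) / (real n + real r + 2)"
      using cb_Suc[of "n+r+1"] by (simp add: algebra_simps)
    have p1: "cb (n+r+1) > 0" "real n + real r + 2 > 0" "2*(2*real n + 2*real r + 3) > 0"
      using cb_pos[of "n+r+1"] by auto
    show "cb n / cb (n+Suc r+1) = (cb n / cb (n+r+1)) * ((real n + real r + 2) / (2*(2*real n + 2*real r + 3)))"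
      unfolding h using p1 by (simp add: field_simps)
  qed
  also have "\<dots> \<longlonglongrightarrow> 1/4^(r+1) * (1/4)"
    by (intro tendsto_mult Suc.IH rat_lim1)
  finally show ?case by (simp add: field_simps)
qed

lemma G_lim: "(\<lambda>m. Gn r (Suc m)) \<longlonglongrightarrow> 1/(2*(real r+3)*4^(r+1))"
proof -
  have e: "Gn r n = ((16*real n^4 + 8*(real r+4)*real n^3 + (-2*real r^2+2*real r-4)*real n^2
   - (real r^2+13*real r+32)*real n + 3*real r^2+3*real r-12) * real n /
   ((2*real n + 2*real r + 3) * (2*real n - 1)^2 * (2*real n + 1) * (2*real n + 3))) / (real r + 3) * (cb n / cb (n+r+1))" for n
    unfolding Gn_def Y_def t_def by (simp add: field_simps)
  have "(\<lambda>n. Gn r n) \<longlonglongrightarrow> (1/2) / (real r + 3) * (1/4^(r+1))"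
    unfolding e by (intro tendsto_mult tendsto_divide rat_lim2 beta_lim tendsto_const) simp
  hence "(\<lambda>m. Gn r (Suc m)) \<longlonglongrightarrow> (1/2) / (real r + 3) * (1/4^(r+1))"
    by (rule LIMSEQ_Suc)
  thus ?thesis by (simp add: field_simps)
qed

lemma step_sums:
  "(\<lambda>m. 8*(real r+3)*(3*real r^2+5*real r+4) * t (Suc r) (Suc m) - (2*real r+1)*(3*real r^2+11*real r+12) * t r (Suc m))
     sums (1/(2*(real r+3)*4^(r+1)))"
proof -
  have "(\<lambda>m. Gn r (Suc (Suc m)) - Gn r (Suc m)) sums (1/(2*(real r+3)*4^(r+1)) - Gn r (Suc 0))"
    by (rule telescope_sums[OF G_lim])
  moreover have "Gn r (Suc 0) = 0" unfolding Gn_def Y_def by (simp add: algebra_simps power2_eq_square)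
  ultimately show ?thesis unfolding step_id by simp
qed

lemma fin_poly: fixes R w :: real
  shows "8*(R+3)*(3*R^2+5*R+4)*(8*(((2*R+5)*(((2*R+3)*((2*R+1)*w*(2*R+2)+1)*(2*R+4)+(2*R+2)^2))*(2*R+6)+(2*R+2)^2*(2*R+4)^2)) - 8*(((2*R+3)*((2*R+1)*w*(2*R+2)+1)*(2*R+4)+(2*R+2)^2))*(2*R+6)^2 + 3*((2*R+1)*w*(2*R+2)+1)*(2*R+4)^2*(2*R+6)^2 + 6*(2*R+2)^2*(2*R+4)^2*(2*R+6) - 3*(2*R+2)^2*(2*R+4)*(2*R+6)^2)
   = 512*(2*R+2)^2*(2*R+4)^2*(2*R+6) + 4*((2*R+1)*(3*R^2+11*R+12))*(8*(((2*R+3)*((2*R+1)*w*(2*R+2)+1)*(2*R+4)+(2*R+2)^2))*(2*R+6)^2 - 8*((2*R+1)*w*(2*R+2)+1)*(2*R+4)^2*(2*R+6)^2 + 3*w*(2*R+2)^2*(2*R+4)^2*(2*R+6)^2 + 6*(2*R+2)^2*(2*R+4)*(2*R+6)^2 - 3*(2*R+2)*(2*R+4)^2*(2*R+6)^2)"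
  by (simp add: algebra_simps power2_eq_square)

lemma fin_alg0:
  fixes R w w1 w2 w3 p A B C Q :: real
  assumes A: "A \<noteq> 0" and B: "B \<noteq> 0" and C: "C \<noteq> 0" and p: "p \<noteq> 0" and R3: "R+3 \<noteq> 0" and Q: "Q \<noteq> 0"
  and e1: "w1 = ((2*R+1) * w + 1/A) / A"
  and e2: "w2 = ((2*R+3) * w1 + 1/B) / B"
  and e3: "w3 = ((2*R+5) * w2 + 1/C) / C"
  and AA: "A = 2*R+2" and BB: "B = 2*R+4" and CC: "C = 2*R+6" and QQ: "Q = 3*R^2+5*R+4"
  shows "1/(4*p) * ((8*w3 - 8*w2 + 3*w1)/128 + 6/(128*C) - 3/(128*B))
     = (1/(2*(R+3)*p) + (2*R+1)*(3*R^2+11*R+12) * (1/p * ((8*w2 - 8*w1 + 3*w)/128 + 6/(128*B) - 3/(128*A))))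
       / (8*(R+3)*Q)"
proof -
  define c1 where "c1 = (2*R+1)*(3*R^2+11*R+12)"
  define N1 where "N1 = (2*R+1)*w*A+1"
  define N2 where "N2 = (2*R+3)*N1*B+A^2"
  define N3 where "N3 = (2*R+5)*N2*C+A^2*B^2"
  have f1: "w1 = N1/A^2" unfolding e1 N1_def using A by (simp add: field_simps power2_eq_square)
  have f2: "w2 = N2/(A^2*B^2)" unfolding e2 f1 N2_def using A B by (simp add: field_simps power2_eq_square)
  have f3: "w3 = N3/(A^2*B^2*C^2)" unfolding e3 f2 N3_def using A B C by (simp add: field_simps power2_eq_square)
  define PL where "PL = 8*N3 - 8*N2*C^2 + 3*N1*B^2*C^2 + 6*A^2*B^2*C - 3*A^2*B*C^2"
  define PR where "PR = 8*N2*C^2 - 8*N1*B^2*C^2 + 3*w*A^2*B^2*C^2 + 6*A^2*B*C^2 - 3*A*B^2*C^2"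
  have E1: "8*w3 - 8*w2 + 3*w1 + 6/C - 3/B = PL/(A^2*B^2*C^2)"
    unfolding f1 f2 f3 PL_def using A B C by (simp add: field_simps power2_eq_square)
  have E0: "8*w2 - 8*w1 + 3*w + 6/B - 3/A = PR/(A^2*B^2*C^2)"
    unfolding f1 f2 PR_def using A B C by (simp add: field_simps power2_eq_square)
  have PI: "8*(R+3)*Q*PL = 512*A^2*B^2*C + 4*c1*PR"
    unfolding PL_def PR_def N3_def N2_def N1_def c1_def AA BB CC QQ by (rule fin_poly)
  have L0: "8*(R+3)*Q*(8*w3 - 8*w2 + 3*w1 + 6/C - 3/B) = 512/C + 4*c1*(8*w2 - 8*w1 + 3*w + 6/B - 3/A)"
  proof -
    have "8*(R+3)*Q*(PL/(A^2*B^2*C^2)) = (8*(R+3)*Q*PL)/(A^2*B^2*C^2)" by simp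
    also have "\<dots> = (512*A^2*B^2*C + 4*c1*PR)/(A^2*B^2*C^2)" unfolding PI ..
    also have "\<dots> = 512/C + 4*c1*(PR/(A^2*B^2*C^2))" using A B C by (simp add: field_simps power2_eq_square)
    finally show ?thesis unfolding E1 E0 .
  qed
  have CR: "512/C = 256/(R+3)"
  proof -
    have "512*(R+3) = 256*C" using CC by simp
    thus ?thesis using frac_eq_eq[OF C R3, of 512 256] by simp
  qed
  define X where "X = 8*w3 - 8*w2 + 3*w1 + 6/C - 3/B"
  define Z where "Z = 8*w2 - 8*w1 + 3*w + 6/B - 3/A"
  have L1: "8*(R+3)*Q*X = 256/(R+3) + 4*c1*Z" using L0 CR unfolding X_def Z_def by simp
  have lhs: "1/(4*p) * ((8*w3 - 8*w2 + 3*w1)/128 + 6/(128*C) - 3/(128*B)) = X/(512*p)"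
    unfolding X_def using p B C by (simp add: field_simps)
  have zz: "(8*w2 - 8*w1 + 3*w)/128 + 6/(128*B) - 3/(128*A) = Z/128"
    unfolding Z_def using A B by (simp add: field_simps)
  have cc1: "(2*R+1)*(3*R^2+11*R+12) = c1" unfolding c1_def ..
  have gen: "(1/(2*S*p) + c * (1/p * (Z/128)))/(8*S*Q) = (256/S + 4*c*Z)/(512*p*(8*S*Q))"
    if "S \<noteq> 0" for S c :: real using that p Q by (simp add: field_simps)
  have rhs: "(1/(2*(R+3)*p) + (2*R+1)*(3*R^2+11*R+12) * (1/p * ((8*w2 - 8*w1 + 3*w)/128 + 6/(128*B) - 3/(128*A))))
       / (8*(R+3)*Q) = (256/(R+3) + 4*c1*Z)/(512*p*(8*(R+3)*Q))"
    unfolding zz cc1 by (rule gen[OF R3])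
  have gen2: "X/(512*p) = (T*X)/(512*p*T)" if "T \<noteq> 0" for T :: real using that p by simp
  show ?thesis unfolding lhs rhs L1[symmetric] by (rule gen2) (use R3 Q in simp)
qed
lemma odd_sq: "(\<lambda>m. 1/(2*real m+1)^2) sums (pi^2/8)"
proof -
  have s: "(\<lambda>n. 1/(real n+1)^2) sums (pi^2/6)"
    using inverse_squares_sums by (simp add: add.commute)
  have g: "(\<lambda>n. sum (\<lambda>n. 1/(real n+1)^2) {n*2..<n*2+2}) sums (pi^2/6)"
    by (rule sums_group[OF s]) simp
  have ev: "(\<lambda>n. 1/4 * (1/(real n+1)^2)) sums (1/4 * (pi^2/6))"
    by (rule sums_mult[OF s])
  have "(\<lambda>n. sum (\<lambda>n. 1/(real n+1)^2) {n*2..<n*2+2} - 1/4 * (1/(real n+1)^2)) sums (pi^2/6 - 1/4 * (pi^2/6))"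
    by (rule sums_diff[OF g ev])
  moreover have "sum (\<lambda>n. 1/(real n+1)^2) {n*2..<n*2+2} - 1/4 * (1/(real n+1)^2) = 1/(2*real n+1)^2" for n
  proof -
    have "{n*2..<n*2+2} = {n*2, n*2+1}" by auto
    hence "sum (\<lambda>n. 1/(real n+1)^2) {n*2..<n*2+2} = 1/(2*real n+1)^2 + 1/(2*real n+2)^2"
      by (simp add: algebra_simps)
    moreover have "1/(2*real n+2)^2 = 1/4 * (1/(real n+1)^2)"
      by (simp add: power2_eq_square field_simps)
    ultimately show ?thesis by simp
  qed
  ultimately show ?thesis by simp
qed

definition Hb :: "nat \<Rightarrow> real" where
  "Hb n = 1/8*(3/64*(1/(2*real n+3)^2 - 1/(2*real n+1)^2) + 1/128*(1/(2*real n+1) + 1/(2*real n+3)))"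

lemma base_poly: fixes M :: real shows
  "4096*((M+1)*(M+2)) = 32*((2*M+1)^2*(2*M+5)^2) + 48*((2*M+1)^2*(2*M+3)^2 - 2*((2*M+1)^2*(2*M+5)^2) + (2*M+3)^2*(2*M+5)^2) + 8*((2*M+1)^2*(2*M+3)^2*(2*M+5) - (2*M+1)*(2*M+3)^2*(2*M+5)^2)"
  by (simp add: algebra_simps power2_eq_square)

lemma base_gen: fixes M a b c :: real
  assumes "a \<noteq> 0" "b \<noteq> 0" "c \<noteq> 0"
  and "4096*((M+1)*(M+2)) = 32*(a^2*c^2) + 48*(a^2*b^2 - 2*(a^2*c^2) + b^2*c^2) + 8*(a^2*b^2*c - a*b^2*c^2)"
  shows "(M+1)*(M+2)/(2*a^2*b^2*c^2) = 1/(256*b^2) + 1/8*(3/64*(1/c^2 - 2/b^2 + 1/a^2) + 1/128*(1/c - 1/a))"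
proof -
  have "(M+1)*(M+2) = (32*(a^2*c^2) + 48*(a^2*b^2 - 2*(a^2*c^2) + b^2*c^2) + 8*(a^2*b^2*c - a*b^2*c^2))/4096"
    using assms(4) by simp
  show ?thesis unfolding \<open>(M+1)*(M+2) = _\<close> using assms(1-3) by (simp add: field_simps power2_eq_square)
qed

lemma base_id: "t 0 (Suc m) = 1/(2*real (Suc m)+1)^2/256 + (Hb (Suc m) - Hb m)"
proof -
  define M where "M = real m"
  have M: "M \<ge> 0" unfolding M_def by simp
  have c: "cb (Suc m) / cb (Suc (Suc m)) = (M+2)/(2*(2*M+3))"
    using cb_Suc[of "Suc m"] cb_pos[of "Suc m"] cb_pos[of "Suc (Suc m)"] M unfolding M_def by (simp add: field_simps)
  have tt0: "t 0 (Suc m) = (M+1) / ((2*(M+1) + 2*0 + 3) * (2*(M+1) - 1)^2 * (2*(M+1) + 1) * (2*(M+1) + 3)) * ((M+2)/(2*(2*M+3)))"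
    unfolding t_def c[unfolded M_def, symmetric] M_def by simp
  have g: "2*(M+1) + 2*0 + 3 = 2*M+5" "2*(M+1) - 1 = 2*M+1" "2*(M+1) + 1 = 2*M+3" "2*(M+1) + 3 = 2*M+5" by simp_all
  have gen: "(M+1) / (C * A^2 * B * C) * ((M+2)/(2*B)) = (M+1)*(M+2)/(2*A^2*B^2*C^2)" for A B C :: real
    by (simp add: power2_eq_square mult_ac)
  have tt: "t 0 (Suc m) = (M+1)*(M+2)/(2*(2*M+1)^2*(2*M+3)^2*(2*M+5)^2)"
    unfolding tt0 g gen ..
  have hh: "1/(2*real (Suc m)+1)^2/256 + (Hb (Suc m) - Hb m) =
     1/(256*(2*M+3)^2) + 1/8*(3/64*(1/(2*M+5)^2 - 2/(2*M+3)^2 + 1/(2*M+1)^2) + 1/128*(1/(2*M+5) - 1/(2*M+1)))"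
    unfolding Hb_def M_def by (simp add: algebra_simps)
  show ?thesis unfolding tt hh
    by (rule base_gen[OF _ _ _ base_poly]) (use M in auto)
qed

lemma base_sums: "(\<lambda>m. t 0 (Suc m)) sums (pi^2/2048)"
proof -
  have o: "(\<lambda>m. 1/(2*real (Suc m)+1)^2) sums (pi^2/8 - 1)"
    using odd_sq sums_Suc_iff[of "\<lambda>m. 1/(2*real m+1)^2" "pi^2/8 - 1"] by simp
  have hl: "Hb \<longlonglongrightarrow> 0" unfolding Hb_def by real_asymp
  have "(\<lambda>m. 1/(2*real (Suc m)+1)^2/256 + (Hb (Suc m) - Hb m)) sums ((pi^2/8 - 1)/256 + (0 - Hb 0))"
    by (intro sums_add sums_divide o telescope_sums hl)
  moreover have "Hb 0 = -1/256" unfolding Hb_def by simp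
  ultimately show ?thesis unfolding base_id by (simp add: field_simps)
qed

lemma solve_lin: "(a::real) \<noteq> 0 \<Longrightarrow> a * x = b \<Longrightarrow> x = b / a"
  by (simp add: field_simps)

theorem theorem5p0p2:
  fixes r :: nat
  shows "(\<lambda>m. let n = Suc m in
            real n / ((2*real n + 2*real r + 3) * (2*real n - 1)^2 * (2*real n + 1) * (2*real n + 3))
            * (real ((2*n) choose n) / real ((2*n + 2*r + 2) choose (n + r + 1))))
         sums (1 / 2^(2*r+2) * ((8 * wp (2*r+4) - 8 * wp (2*r+2) + 3 * wp (2*r)) / 128
                 + 6 / (128 * (4 + 2*real r)) - 3 / (128 * (2 + 2*real r))))"
proof -
  define Rv where "Rv r = (1 / 2^(2*r+2) * ((8 * wp (2*r+4) - 8 * wp (2*r+2) + 3 * wp (2*r)) / 128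
                 + 6 / (128 * (4 + 2*real r)) - 3 / (128 * (2 + 2*real r))))" for r :: nat
  have main: "(\<lambda>m. t r (Suc m)) sums Rv r" for r
  proof (induction r)
    case 0
    have a: "2 * wp 2 = wp 0 + 1/2" using wp_rec[of 0] by (simp add: numeral_2_eq_2)
    have b: "4 * wp 4 = 3 * wp 2 + 1/4" using wp_rec[of 2] by simp
    have "Rv 0 = pi^2/2048" unfolding Rv_def using a b wp0 by (simp add: numeral_2_eq_2[symmetric])
    thus ?case using base_sums by (simp only:)
  next
    case (Suc r)
    define R where "R = real r"
    define c0 where "c0 = 8*(R+3)*(3*R^2+5*R+4)"
    define c1 where "c1 = (2*R+1)*(3*R^2+11*R+12)"
    define p :: real where "p = 2^(2*r+2)"
    have R: "R \<ge> 0" unfolding R_def by simp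
    have q: "3*R^2+5*R+4 > 0" using R by (simp add: add_nonneg_pos)
    have c0: "c0 \<noteq> 0" unfolding c0_def using R q by simp
    have p: "p > 0" unfolding p_def by simp
    have p4: "(4::real)^(r+1) = p" unfolding p_def by (simp add: power_mult)
    have st: "(\<lambda>m. c0 * t (Suc r) (Suc m) - c1 * t r (Suc m)) sums (1/(2*(R+3)*p))"
      using step_sums[of r] unfolding c0_def c1_def R_def p4 .
    have "(\<lambda>m. (c0 * t (Suc r) (Suc m) - c1 * t r (Suc m)) + c1 * t r (Suc m)) sums (1/(2*(R+3)*p) + c1 * Rv r)"
      by (intro sums_add st sums_mult Suc.IH)
    hence "(\<lambda>m. c0 * t (Suc r) (Suc m)) sums (1/(2*(R+3)*p) + c1 * Rv r)" by simp
    hence "(\<lambda>m. c0 * t (Suc r) (Suc m) / c0) sums ((1/(2*(R+3)*p) + c1 * Rv r) / c0)"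
      by (rule sums_divide)
    hence s: "(\<lambda>m. t (Suc r) (Suc m)) sums ((1/(2*(R+3)*p) + c1 * Rv r) / c0)" using c0 by simp
    have rr: "real (2*r+2) = 2*R+2" "real (2*r+1) = 2*R+1" "real (2*r+4) = 2*R+4" "real (2*r+3) = 2*R+3"
      "real (2*r+6) = 2*R+6" "real (2*r+5) = 2*R+5" unfolding R_def by simp_all
    have ee: "2*r+2+2 = 2*r+4" "2*r+2+1 = 2*r+3" "2*r+4+2 = 2*r+6" "2*r+4+1 = 2*r+5" by simp_all
    have h1: "wp (2*r+2) = ((2*R+1) * wp (2*r) + 1/(2*R+2)) / (2*R+2)"
    proof -
      have "real (2*r+2) * wp (2*r+2) = real (2*r+1) * wp (2*r) + 1/real(2*r+2)" by (rule wp_rec)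
      hence "(2*R+2) * wp (2*r+2) = (2*R+1) * wp (2*r) + 1/(2*R+2)" unfolding rr .
      thus ?thesis by (rule solve_lin[rotated]) (use R in simp)
    qed
    have h2: "wp (2*r+4) = ((2*R+3) * wp (2*r+2) + 1/(2*R+4)) / (2*R+4)"
    proof -
      have "real (2*r+2+2) * wp (2*r+2+2) = real (2*r+2+1) * wp (2*r+2) + 1/real(2*r+2+2)" by (rule wp_rec)
      hence "(2*R+4) * wp (2*r+4) = (2*R+3) * wp (2*r+2) + 1/(2*R+4)" unfolding ee rr .
      thus ?thesis by (rule solve_lin[rotated]) (use R in simp)
    qed
    have h3: "wp (2*r+6) = ((2*R+5) * wp (2*r+4) + 1/(2*R+6)) / (2*R+6)"
    proof -
      have "real (2*r+4+2) * wp (2*r+4+2) = real (2*r+4+1) * wp (2*r+4) + 1/real(2*r+4+2)" by (rule wp_rec)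
      hence "(2*R+6) * wp (2*r+6) = (2*R+5) * wp (2*r+4) + 1/(2*R+6)" unfolding ee rr .
      thus ?thesis by (rule solve_lin[rotated]) (use R in simp)
    qed
    have rv0: "Rv r = 1/p * ((8 * wp (2*r+4) - 8 * wp (2*r+2) + 3 * wp (2*r))/128 + 6/(128*(2*R+4)) - 3/(128*(2*R+2)))"
      unfolding Rv_def p_def R_def by (simp add: add.commute)
    have rv1: "Rv (Suc r) = 1/(4*p) * ((8 * wp (2*r+6) - 8 * wp (2*r+4) + 3 * wp (2*r+2))/128 + 6/(128*(2*R+6)) - 3/(128*(2*R+4)))"
    proof -
      have e3: "2 * Suc r = 2*r+2" by simp
      have e4: "2*r+2+4 = 2*r+6" "2*r+2+2 = 2*r+4" by simp_all
      have r4: "4 + 2*real (Suc r) = 2*R+6" "2 + 2*real (Suc r) = 2*R+4" unfolding R_def by simp_all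
      have pp: "(2::real)^(2*r+4) = 4*p" unfolding p_def by (simp add: power_add)
      show ?thesis unfolding Rv_def e3 e4 r4 pp ..
    qed
    have "Rv (Suc r) = (1/(2*(R+3)*p) + c1 * Rv r) / c0"
      unfolding rv0 rv1 c0_def c1_def
      by (rule fin_alg0[OF _ _ _ _ _ _ h1 h2 h3]) (use R p q in auto)
    thus ?case using s by simp
  qed
  have f: "(\<lambda>m. let n = Suc m in
            real n / ((2*real n + 2*real r + 3) * (2*real n - 1)^2 * (2*real n + 1) * (2*real n + 3))
            * (real ((2*n) choose n) / real ((2*n + 2*r + 2) choose (n + r + 1)))) = (\<lambda>m. t r (Suc m))"
  proof
    fix m
    have "2 * (Suc m + r + 1) = 2 * Suc m + 2*r + 2" by simp
    thus "(let n = Suc m in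
            real n / ((2*real n + 2*real r + 3) * (2*real n - 1)^2 * (2*real n + 1) * (2*real n + 3))
            * (real ((2*n) choose n) / real ((2*n + 2*r + 2) choose (n + r + 1)))) = t r (Suc m)"
      unfolding t_def cb_def Let_def by simp
  qed
  show ?thesis unfolding f using main[of r] unfolding Rv_def .
qed

end
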